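(* Let $k$ be a positive integer. (i) There is no function $f:\mathbb{N}\to\mathbb{N}$ such that $\gamma_{P,k}(G-v)\le f(\gamma_{P,k}(G))$ for every graph $G$ and every vertex $v$ of $G$. (ii) For every graph $G$ and every vertex $v$ of $G$, $\gamma_{P,k}(G-v)\ge \gamma_{P,k}(G)-1$. (iii) Moreover, if $\gamma_{P,k}(G-v)= \gamma_{P,k}(G)-1$, then $\mathrm{rad}_{P,k}(G)\le \mathrm{rad}_{P,k}(G-v)$.
   Context: All graphs are finite and simple; $G-v$ is obtained by deleting $v$ and its incident edges. $N_G[v]$ is the closed neighbourhood of $v$, and $N_G[S]$ the union of closed neighbourhoods of vertices of $S$. For $S\subseteq V(G)$, define $\mathcal{P}^{0}_{G,k}(S)=N_G[S]$ and $\mathcal{P}^{i+1}_{G,k}(S)=\bigcup\{N_G[v] : v\in \mathcal{P}^{i}_{G,k}(S),\ |N_G[v]\setminus \mathcal{P}^{i}_{G,k}(S)|\le k\}$; these increase and stabilize to $\mathcal{P}^{\infty}_{G,k}(S)$. $S$ is a $k$-power dominating set ($k$-PDS) if $\mathcal{P}^{\infty}_{G,k}(S)=V(G)$; $\gamma_{P,k}(G)$ is the minimum size of a $k$-PDS. For a $k$-PDS $S$, $\mathrm{rad}_{P,k}(G,S)=1+\min\{i:\mathcal{P}^{i}_{G,k}(S)=V(G)\}$, and $\mathrm{rad}_{P,k}(G)$ is the minimum of $\mathrm{rad}_{P,k}(G,S)$ over all $k$-PDS $S$ of $G$ with $|S|=\gamma_{P,k}(G)$. *)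

theory Defs
  imports Main
begin

definition graph :: "'a set \<Rightarrow> ('a \<Rightarrow> 'a \<Rightarrow> bool) \<Rightarrow> bool" where
  "graph V E \<longleftrightarrow> finite V \<and> (\<forall>u w. E u w \<longrightarrow> u \<in> V \<and> w \<in> V)
     \<and> (\<forall>u w. E u w \<longrightarrow> E w u) \<and> (\<forall>u. \<not> E u u)"

definition del_vert :: "'a set \<Rightarrow> 'a \<Rightarrow> 'a set" where
  "del_vert V v = V - {v}"

definition del_edges :: "('a \<Rightarrow> 'a \<Rightarrow> bool) \<Rightarrow> 'a \<Rightarrow> ('a \<Rightarrow> 'a \<Rightarrow> bool)" where
  "del_edges E v = (\<lambda>u w. E u w \<and> u \<noteq> v \<and> w \<noteq> v)"

definition cnbhd :: "('a \<Rightarrow> 'a \<Rightarrow> bool) \<Rightarrow> 'a \<Rightarrow> 'a set" where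
  "cnbhd E v = insert v {u. E v u}"

definition cnbhd_set :: "('a \<Rightarrow> 'a \<Rightarrow> bool) \<Rightarrow> 'a set \<Rightarrow> 'a set" where
  "cnbhd_set E S = (\<Union>v\<in>S. cnbhd E v)"

fun pdom :: "('a \<Rightarrow> 'a \<Rightarrow> bool) \<Rightarrow> nat \<Rightarrow> 'a set \<Rightarrow> nat \<Rightarrow> 'a set" where
  "pdom E k S 0 = cnbhd_set E S"
| "pdom E k S (Suc i) =
     \<Union>{cnbhd E v | v. v \<in> pdom E k S i \<and> card (cnbhd E v - pdom E k S i) \<le> k}"

definition pdom_inf :: "('a \<Rightarrow> 'a \<Rightarrow> bool) \<Rightarrow> nat \<Rightarrow> 'a set \<Rightarrow> 'a set" where
  "pdom_inf E k S = (\<Union>i. pdom E k S i)"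

definition is_kPDS :: "'a set \<Rightarrow> ('a \<Rightarrow> 'a \<Rightarrow> bool) \<Rightarrow> nat \<Rightarrow> 'a set \<Rightarrow> bool" where
  "is_kPDS V E k S \<longleftrightarrow> S \<subseteq> V \<and> pdom_inf E k S = V"

definition gammaPk :: "'a set \<Rightarrow> ('a \<Rightarrow> 'a \<Rightarrow> bool) \<Rightarrow> nat \<Rightarrow> nat" where
  "gammaPk V E k = (LEAST n. \<exists>S. is_kPDS V E k S \<and> card S = n)"

definition radPk_set :: "'a set \<Rightarrow> ('a \<Rightarrow> 'a \<Rightarrow> bool) \<Rightarrow> nat \<Rightarrow> 'a set \<Rightarrow> nat" where
  "radPk_set V E k S = 1 + (LEAST i. pdom E k S i = V)"

definition radPk :: "'a set \<Rightarrow> ('a \<Rightarrow> 'a \<Rightarrow> bool) \<Rightarrow> nat \<Rightarrow> nat" where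
  "radPk V E k = (LEAST r. \<exists>S. is_kPDS V E k S \<and> card S = gammaPk V E k
                              \<and> r = radPk_set V E k S)"

end

theory Submission
  imports Defs
begin

lemma cnbhd_fin: "graph V E \<Longrightarrow> finite (cnbhd E w)"
  unfolding graph_def cnbhd_def
  by (metis (no_types, lifting) finite_insert finite_subset mem_Collect_eq subsetI)

lemma cnbhd_sub: "graph V E \<Longrightarrow> w \<in> V \<Longrightarrow> cnbhd E w \<subseteq> V"
  unfolding graph_def cnbhd_def by auto

lemma pdom_sub: "graph V E \<Longrightarrow> S \<subseteq> V \<Longrightarrow> pdom E k S i \<subseteq> V"
proof (induction i)
  case 0 then show ?case using cnbhd_sub[of V E] by (auto simp: cnbhd_set_def)
next
  case (Suc i) then show ?case using cnbhd_sub[of V E] by fastforce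
qed

lemma pdom_step: assumes g: "graph V E" shows "pdom E k S i \<subseteq> pdom E k S (Suc i)"
proof (induction i)
  case 0
  show ?case
  proof
    fix u assume "u \<in> pdom E k S 0"
    then obtain s where s: "s \<in> S" "u \<in> cnbhd E s" by (auto simp: cnbhd_set_def)
    have "s \<in> pdom E k S 0" using s by (auto simp: cnbhd_set_def cnbhd_def)
    moreover have "cnbhd E s - pdom E k S 0 = {}" using s by (auto simp: cnbhd_set_def)
    then have "card (cnbhd E s - pdom E k S 0) \<le> k" by (metis card.empty zero_le)
    ultimately show "u \<in> pdom E k S (Suc 0)" using s(2) by (simp only: pdom.simps(2)) blast
  qed
next
  case (Suc i)
  show ?case
  proof
    fix u assume "u \<in> pdom E k S (Suc i)"
    then obtain w where w: "w \<in> pdom E k S i" "card (cnbhd E w - pdom E k S i) \<le> k" "u \<in> cnbhd E w"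
      by auto
    have "card (cnbhd E w - pdom E k S (Suc i)) \<le> card (cnbhd E w - pdom E k S i)"
      using Suc cnbhd_fin[OF g] by (intro card_mono) auto
    with w Suc have "w \<in> pdom E k S (Suc i)" "card (cnbhd E w - pdom E k S (Suc i)) \<le> k" by auto
    then show "u \<in> pdom E k S (Suc (Suc i))" using w(3)
      by (simp only: pdom.simps(2)) blast
  qed
qed

lemma pdom_mono: assumes g: "graph V E" "i \<le> j" shows "pdom E k S i \<subseteq> pdom E k S j"
  using lift_Suc_mono_le[of "pdom E k S", OF pdom_step[OF g(1)] g(2)] .

lemma graph_del: "graph V E \<Longrightarrow> graph (del_vert V v) (del_edges E v)"
  unfolding graph_def del_vert_def del_edges_def by auto

lemma pdom_cmp:
  assumes g: "graph V E" and v: "v \<in> V" and S': "S' \<subseteq> V - {v}"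
  shows "pdom (del_edges E v) k S' i \<subseteq> pdom E k (insert v S') i \<and> v \<in> pdom E k (insert v S') i"
proof (induction i)
  case 0
  show ?case by (auto simp: cnbhd_set_def cnbhd_def del_edges_def)
next
  case (Suc i)
  let ?E' = "del_edges E v"
  have g': "graph (V - {v}) ?E'" using graph_del[OF g] by (simp add: del_vert_def)
  have vin: "v \<in> pdom E k (insert v S') (Suc i)"
    using Suc pdom_step[OF g] by blast
  have "pdom ?E' k S' (Suc i) \<subseteq> pdom E k (insert v S') (Suc i)"
  proof
    fix u assume "u \<in> pdom ?E' k S' (Suc i)"
    then obtain w where w: "w \<in> pdom ?E' k S' i" "card (cnbhd ?E' w - pdom ?E' k S' i) \<le> k"
      "u \<in> cnbhd ?E' w" by auto
    have wV: "w \<in> V - {v}" using w(1) pdom_sub[OF g' S'] by blast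
    have sub: "cnbhd E w - pdom E k (insert v S') i \<subseteq> cnbhd ?E' w - pdom ?E' k S' i"
      using Suc wV by (auto simp: cnbhd_def del_edges_def)
    have "card (cnbhd E w - pdom E k (insert v S') i) \<le> k"
      using card_mono[OF _ sub] cnbhd_fin[OF g'] w(2) by (meson finite_Diff le_trans)
    moreover have "w \<in> pdom E k (insert v S') i" using Suc w(1) by blast
    moreover have "u \<in> cnbhd E w" using w(3) by (auto simp: cnbhd_def del_edges_def)
    ultimately show "u \<in> pdom E k (insert v S') (Suc i)" by (simp only: pdom.simps(2)) blast
  qed
  with vin show ?case by blast
qed

lemma stage_exists:
  assumes g: "graph V E" and p: "pdom_inf E k S = V" and S: "S \<subseteq> V"
  shows "\<exists>i. pdom E k S i = V"
proof -
  have "F \<subseteq> V \<Longrightarrow> \<exists>m. F \<subseteq> pdom E k S m" if "finite F" for F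
    using that
  proof (induction F rule: finite_induct)
    case empty then show ?case by auto
  next
    case (insert x F)
    then obtain m where m: "F \<subseteq> pdom E k S m" by auto
    from insert p obtain j where j: "x \<in> pdom E k S j" by (auto simp: pdom_inf_def)
    have "F \<subseteq> pdom E k S (max m j)" using m pdom_mono[OF g, of m "max m j"] by auto
    moreover have "x \<in> pdom E k S (max m j)" using j pdom_mono[OF g, of j "max m j"] by auto
    ultimately show ?case by blast
  qed
  moreover have "finite V" using g by (simp add: graph_def)
  ultimately obtain m where "V \<subseteq> pdom E k S m" by blast
  then show ?thesis using pdom_sub[OF g S, of k m] by blast
qed

lemma pdom_inf_sub: "graph V E \<Longrightarrow> S \<subseteq> V \<Longrightarrow> pdom_inf E k S \<subseteq> V"
  using pdom_sub unfolding pdom_inf_def by blast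

lemma gamma_attained:
  assumes g: "graph V E"
  shows "\<exists>S. is_kPDS V E k S \<and> card S = gammaPk V E k"
proof -
  have "pdom E k V 0 = V" using cnbhd_sub[OF g] by (auto simp: cnbhd_set_def cnbhd_def)
  then have "is_kPDS V E k V" using pdom_inf_sub[OF g, of V k]
    unfolding is_kPDS_def pdom_inf_def by blast
  then have "\<exists>n S. is_kPDS V E k S \<and> card S = n" by blast
  then show ?thesis unfolding gammaPk_def by (rule LeastI_ex)
qed

lemma ins_kPDS:
  assumes g: "graph V E" and v: "v \<in> V"
    and S': "is_kPDS (del_vert V v) (del_edges E v) k S'"
  shows "is_kPDS V E k (insert v S')"
proof -
  have S's: "S' \<subseteq> V - {v}" using S' by (auto simp: is_kPDS_def del_vert_def)
  have "V \<subseteq> pdom_inf E k (insert v S')"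
  proof
    fix x assume x: "x \<in> V"
    show "x \<in> pdom_inf E k (insert v S')"
    proof (cases "x = v")
      case True
      have "v \<in> pdom E k (insert v S') 0" using pdom_cmp[OF g v S's, of k 0] by blast
      then show ?thesis using True unfolding pdom_inf_def by blast
    next
      case False
      then have "x \<in> pdom_inf (del_edges E v) k S'" using S' x by (auto simp: is_kPDS_def del_vert_def)
      then obtain i where "x \<in> pdom (del_edges E v) k S' i" by (auto simp: pdom_inf_def)
      then have "x \<in> pdom E k (insert v S') i" using pdom_cmp[OF g v S's, of k i] by blast
      then show ?thesis unfolding pdom_inf_def by blast
    qed
  qed
  moreover have iv: "insert v S' \<subseteq> V" using S's v by auto
  moreover have "pdom_inf E k (insert v S') \<subseteq> V" by (rule pdom_inf_sub[OF g iv])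
  ultimately show ?thesis unfolding is_kPDS_def by blast
qed

lemma edgeless_gamma:
  assumes f: "finite V" and e: "\<And>u w. \<not> E0 u w"
  shows "gammaPk V E0 k = card V"
proof -
  have cn: "cnbhd E0 x = {x}" for x using e by (auto simp: cnbhd_def)
  have p0: "pdom E0 k S 0 = S" for S by (auto simp: cnbhd_set_def cn)
  have ps: "pdom E0 k S i \<subseteq> S" for S i
  proof (induction i)
    case 0 then show ?case using p0 by simp
  next
    case (Suc i)
    have "pdom E0 k S (Suc i) \<subseteq> pdom E0 k S i"
    proof
      fix x assume "x \<in> pdom E0 k S (Suc i)"
      then obtain w where "w \<in> pdom E0 k S i" "x \<in> cnbhd E0 w" by auto
      then show "x \<in> pdom E0 k S i" using cn by simp
    qed
    then show ?case using Suc by blast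
  qed
  have pis: "pdom_inf E0 k S \<subseteq> S" for S unfolding pdom_inf_def using ps by (simp add: UN_least)
  have pis2: "S \<subseteq> pdom_inf E0 k S" for S unfolding pdom_inf_def using p0 by (metis UN_upper UNIV_I)
  have iff: "is_kPDS V E0 k S \<longleftrightarrow> S = V" for S
    unfolding is_kPDS_def using pis[of S] pis2[of S] by blast
  show ?thesis unfolding gammaPk_def iff by (rule Least_equality) auto
qed

lemma partI: fixes k :: nat shows "\<not> (\<exists>f :: nat \<Rightarrow> nat. \<forall>(V :: nat set) E v. graph V E \<and> v \<in> V \<longrightarrow>
              gammaPk (del_vert V v) (del_edges E v) k \<le> f (gammaPk V E k))"
proof
  assume "\<exists>f :: nat \<Rightarrow> nat. \<forall>(V :: nat set) E v. graph V E \<and> v \<in> V \<longrightarrow>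
            gammaPk (del_vert V v) (del_edges E v) k \<le> f (gammaPk V E k)"
  then obtain f :: "nat \<Rightarrow> nat" where f: "\<And>(V :: nat set) E v. graph V E \<Longrightarrow> v \<in> V \<Longrightarrow>
            gammaPk (del_vert V v) (del_edges E v) k \<le> f (gammaPk V E k)" by blast
  define n where "n = max (f 0) (f 1) + 1"
  define V :: "nat set" where "V = {0..n}"
  define E :: "nat \<Rightarrow> nat \<Rightarrow> bool" where
    "E = (\<lambda>u w. (u = 0 \<and> w \<in> {1..n}) \<or> (w = 0 \<and> u \<in> {1..n}))"
  have g: "graph V E" unfolding graph_def V_def E_def by auto
  have "pdom E k {0} 0 = V" unfolding V_def E_def by (auto simp: cnbhd_set_def cnbhd_def)
  moreover have "pdom_inf E k {0} \<subseteq> V" using pdom_inf_sub[OF g, of "{0}" k] by (simp add: V_def)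
  ultimately have "pdom_inf E k {0} = V" unfolding pdom_inf_def by blast
  then have "is_kPDS V E k {0}" unfolding is_kPDS_def V_def by auto
  then have "gammaPk V E k \<le> card {0::nat}" unfolding gammaPk_def by (intro Least_le) blast
  then have "gammaPk V E k \<le> 1" by simp
  then have "gammaPk V E k = 0 \<or> gammaPk V E k = 1" by linarith
  then have fle: "f (gammaPk V E k) \<le> max (f 0) (f 1)" by (elim disjE) simp_all
  have gn: "gammaPk (del_vert V 0) (del_edges E 0) k = n"
  proof -
    have "gammaPk (del_vert V 0) (del_edges E 0) k = card (del_vert V 0)"
      by (rule edgeless_gamma) (auto simp: del_vert_def V_def del_edges_def E_def)
    moreover have "del_vert V 0 = {1..n}" by (auto simp: del_vert_def V_def)
    ultimately show ?thesis by simp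
  qed
  have "0 \<in> V" by (simp add: V_def)
  from f[OF g this] gn have "n \<le> f (gammaPk V E k)" by simp
  with fle n_def show False by linarith
qed

lemma partII: fixes k :: nat and V :: "'a set"
  assumes a: "graph V E \<and> v \<in> V"
  shows "gammaPk V E k \<le> gammaPk (del_vert V v) (del_edges E v) k + 1"
proof -
  from a have g: "graph V E" and v: "v \<in> V" by auto
  obtain S' where S': "is_kPDS (del_vert V v) (del_edges E v) k S'"
    "card S' = gammaPk (del_vert V v) (del_edges E v) k"
    using gamma_attained[OF graph_del[OF g]] by blast
  have K: "is_kPDS V E k (insert v S')" by (rule ins_kPDS[OF g v S'(1)])
  have "gammaPk V E k \<le> card (insert v S')" unfolding gammaPk_def by (rule Least_le) (use K in blast)
  also have "\<dots> \<le> card S' + 1" by (cases "finite S'") (auto simp: card_insert_if)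
  finally show "gammaPk V E k \<le> gammaPk (del_vert V v) (del_edges E v) k + 1" using S'(2) by simp
qed

lemma partIII: fixes k :: nat and V :: "'a set"
  assumes a: "graph V E \<and> v \<in> V
              \<and> gammaPk (del_vert V v) (del_edges E v) k + 1 = gammaPk V E k"
  shows "radPk V E k \<le> radPk (del_vert V v) (del_edges E v) k"
proof -
  from a have g: "graph V E" and v: "v \<in> V" and eq: "gammaPk (del_vert V v) (del_edges E v) k + 1 = gammaPk V E k" by auto
  let ?V' = "del_vert V v" and ?E' = "del_edges E v"
  have g': "graph ?V' ?E'" by (rule graph_del[OF g])
  have "\<exists>r S. is_kPDS ?V' ?E' k S \<and> card S = gammaPk ?V' ?E' k \<and> r = radPk_set ?V' ?E' k S"
    using gamma_attained[OF g'] by blast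
  then have "\<exists>S. is_kPDS ?V' ?E' k S \<and> card S = gammaPk ?V' ?E' k \<and> radPk ?V' ?E' k = radPk_set ?V' ?E' k S"
    unfolding radPk_def by (rule LeastI_ex)
  then obtain S' where S': "is_kPDS ?V' ?E' k S'" "card S' = gammaPk ?V' ?E' k"
    "radPk ?V' ?E' k = radPk_set ?V' ?E' k S'" by blast
  have S's: "S' \<subseteq> V - {v}" using S'(1) by (auto simp: is_kPDS_def del_vert_def)
  have fin: "finite S'" using S's g finite_subset by (auto simp: graph_def)
  have K: "is_kPDS V E k (insert v S')" by (rule ins_kPDS[OF g v S'(1)])
  have vS: "v \<notin> S'" using S's by blast
  have card: "card (insert v S') = gammaPk V E k" using fin vS S'(2) eq by simp
  have "radPk V E k \<le> radPk_set V E k (insert v S')"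
    unfolding radPk_def by (rule Least_le) (use K card in blast)
  also have "\<dots> \<le> radPk_set ?V' ?E' k S'"
  proof -
    have pi: "pdom_inf ?E' k S' = ?V'" and ss: "S' \<subseteq> ?V'" using S'(1) by (auto simp: is_kPDS_def)
    have "\<exists>i. pdom ?E' k S' i = ?V'" by (rule stage_exists[OF g' pi ss])
    then have i0: "pdom ?E' k S' (LEAST i. pdom ?E' k S' i = ?V') = ?V'" by (rule LeastI_ex)
    define i where "i = (LEAST i. pdom ?E' k S' i = ?V')"
    have i0': "pdom ?E' k S' i = V - {v}" using i0 unfolding i_def del_vert_def .
    have c1: "pdom ?E' k S' i \<subseteq> pdom E k (insert v S') i" and c2: "v \<in> pdom E k (insert v S') i"
      using pdom_cmp[OF g v S's, of k i] by blast+
    have c3: "pdom E k (insert v S') i \<subseteq> V" using pdom_sub[OF g, of "insert v S'" k i] S's v by blast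
    have "pdom E k (insert v S') i = V" using i0' c1 c2 c3 by blast
    then have "(LEAST i. pdom E k (insert v S') i = V) \<le> i" by (rule Least_le)
    then show ?thesis unfolding radPk_set_def i_def by simp
  qed
  also have "\<dots> = radPk ?V' ?E' k" using S'(3) by simp
  finally show "radPk V E k \<le> radPk ?V' ?E' k" .
qed

theorem mainTheorem2:
  fixes k :: nat
  assumes "k \<ge> 1"
  shows "(\<not> (\<exists>f :: nat \<Rightarrow> nat. \<forall>(V :: nat set) E v. graph V E \<and> v \<in> V \<longrightarrow>
              gammaPk (del_vert V v) (del_edges E v) k \<le> f (gammaPk V E k)))
    \<and> (\<forall>(V :: 'a set) E v. graph V E \<and> v \<in> V \<longrightarrow>
              gammaPk V E k \<le> gammaPk (del_vert V v) (del_edges E v) k + 1)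
    \<and> (\<forall>(V :: 'a set) E v. graph V E \<and> v \<in> V
              \<and> gammaPk (del_vert V v) (del_edges E v) k + 1 = gammaPk V E k \<longrightarrow>
              radPk V E k \<le> radPk (del_vert V v) (del_edges E v) k)"
  apply (intro conjI allI impI)
    apply (rule partI)
   apply (erule partII)
  apply (erule partIII)
  done

end
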